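(* Let $p\ge1$, $X=\{0,1,\dots,p\}$, and for $i\in\{1,\dots,p\}$ let $e_i$ be the transformation of $X^\ast$ defined recursively (with $\emptyset\mapsto\emptyset$) by $e_i(0w)=i\,e_i(w)$, $e_i(iw)=0w$, $e_i(jw)=jw$ for $j\notin\{0,i\}$. For $n\ge1$ let $A_n=\sum_{i=1}^p\bigl(M^{(n)}_i+(M^{(n)}_i)^{-1}\bigr)$, where $M^{(n)}_i$ is the $(p+1)^n\times(p+1)^n$ permutation matrix of the action of $e_i$ on $X^n$, and let $P_n(\lambda)=\det(\lambda I-A_n)$. Then for every $n\ge1$ $$P_{n+1}(\lambda)=\bigl(\lambda-2(p-1)\bigr)^{(p-1)(p+1)^n}\,P_n(f_p(\lambda)),\qquad f_p(\lambda)=\lambda^2-2(p-1)\lambda-2p,$$ and $P_1(\lambda)=(\lambda-2p)(\lambda+2)(\lambda-2(p-1))^{p-1}$.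
   Context: The group generated by $e_1,\dots,e_p$ is the star automaton group $\mathcal G_{S_p}$; $A_n$ is the adjacency matrix of its $n$-th Schreier graph $\Gamma^p_n$ (vertex set $X^n$, an edge joining $v$ and $e_i(v)$ for each $v$ and $i$, loops counted twice on the diagonal). *)

theory Defs
  imports "Jordan_Normal_Form.Char_Poly"
begin

fun star_e :: "nat \<Rightarrow> nat list \<Rightarrow> nat list" where
  "star_e i [] = []"
| "star_e i (x # w) = (if x = 0 then i # star_e i w else if x = i then 0 # w else x # w)"

definition word_of :: "nat \<Rightarrow> nat \<Rightarrow> nat \<Rightarrow> nat list" where
  "word_of p n k = map (\<lambda>j. k div (p + 1) ^ j mod (p + 1)) [0..<n]"

definition perm_mat :: "nat \<Rightarrow> nat \<Rightarrow> nat \<Rightarrow> int mat" where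
  "perm_mat p n i = mat ((p + 1) ^ n) ((p + 1) ^ n)
     (\<lambda>(r, c). if word_of p n r = star_e i (word_of p n c) then 1 else 0)"

text \<open>Its inverse: the permutation matrix of e_i^{-1}.\<close>
definition perm_mat_inv :: "nat \<Rightarrow> nat \<Rightarrow> nat \<Rightarrow> int mat" where
  "perm_mat_inv p n i = mat ((p + 1) ^ n) ((p + 1) ^ n)
     (\<lambda>(r, c). if star_e i (word_of p n r) = word_of p n c then 1 else 0)"

definition adj_mat :: "nat \<Rightarrow> nat \<Rightarrow> int mat" where
  "adj_mat p n = mat ((p + 1) ^ n) ((p + 1) ^ n)
     (\<lambda>(r, c). \<Sum>i = 1..p. perm_mat p n i $$ (r, c) + perm_mat_inv p n i $$ (r, c))"

definition f_poly :: "nat \<Rightarrow> int poly" where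
  "f_poly p = [: - 2 * int p, - 2 * (int p - 1), 1 :]"

end

theory Submission
  imports Defs
begin

definition wval :: "nat \<Rightarrow> nat list \<Rightarrow> nat" where
  "wval p L = foldr (\<lambda>x acc. x + (p+1)*acc) L 0"

definition valid :: "nat \<Rightarrow> nat \<Rightarrow> nat list \<Rightarrow> bool" where
  "valid p n L \<longleftrightarrow> length L = n \<and> (\<forall>x\<in>set L. x \<le> p)"

lemma word_of_Suc: "word_of p (Suc n) k = k mod (p+1) # word_of p n (k div (p+1))"
proof -
  have "\<And>j. k div (p+1)^(Suc j) = k div (p+1) div (p+1)^j" by (simp only: power_Suc div_mult2_eq)
  then show ?thesis unfolding word_of_def map_upt_Suc by simp
qed

lemma word_of_0[simp]: "word_of p 0 k = []" by (simp add: word_of_def)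

lemma valid_word_of: "valid p n (word_of p n k)"
  unfolding valid_def word_of_def by auto

lemma wval_word_of: "k < (p+1)^n \<Longrightarrow> wval p (word_of p n k) = k"
proof (induction n arbitrary: k)
  case 0 then show ?case by (simp add: wval_def)
next
  case (Suc n)
  have "k div (p+1) < (p+1)^n" using Suc.prems
    by (simp add: less_mult_imp_div_less mult.commute)
  then have "wval p (word_of p n (k div (p+1))) = k div (p+1)" using Suc.IH by blast
  then have "wval p (word_of p (Suc n) k) = k mod (p+1) + (p+1) * (k div (p+1))"
    by (simp only: word_of_Suc wval_def foldr.simps o_def)
  then show ?case using mod_mult_div_eq[of k "p+1"] by linarith
qed

lemma word_of_wval: "valid p n L \<Longrightarrow> word_of p n (wval p L) = L \<and> wval p L < (p+1)^n"
proof (induction L arbitrary: n)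
  case Nil then show ?case by (simp add: valid_def wval_def)
next
  case (Cons x L)
  then obtain m where n: "n = Suc m" and v: "valid p m L" and x: "x \<le> p"
    by (cases n) (auto simp: valid_def)
  have IH: "word_of p m (wval p L) = L" "wval p L < (p+1)^m" using Cons.IH v by auto
  have e: "wval p (x # L) = x + (p+1) * wval p L" by (simp add: wval_def)
  have "(x + (p+1) * wval p L) mod (p+1) = x" using x mod_mult_self2[of x "p+1" "wval p L"] mod_less[of x "p+1"] by linarith
  moreover have "(x + (p+1) * wval p L) div (p+1) = wval p L" using x div_mult_self2[of "p+1" x "wval p L"] div_less[of x "p+1"] by linarith
  moreover have "x + (p+1) * wval p L < (p+1)^(Suc m)"
  proof -
    have "wval p L + 1 \<le> (p+1)^m" using IH(2) by simp
    then have "(p+1) * (wval p L + 1) \<le> (p+1)*(p+1)^m" by (rule mult_left_mono) simp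
    then show ?thesis using x by (simp add: algebra_simps)
  qed
  ultimately show ?case using IH n e by (simp add: word_of_Suc)
qed

lemma word_of_eq_iff: "u < (p+1)^n \<Longrightarrow> valid p n L \<Longrightarrow> word_of p n u = L \<longleftrightarrow> u = wval p L"
  using wval_word_of word_of_wval by metis

lemma word_of_inj: "u < (p+1)^n \<Longrightarrow> v < (p+1)^n \<Longrightarrow> word_of p n u = word_of p n v \<longleftrightarrow> u = v"
  using wval_word_of by metis

lemma star_e_length[simp]: "length (star_e i L) = length L"
  by (induction L) auto

lemma star_e_valid: "i \<le> p \<Longrightarrow> valid p n L \<Longrightarrow> valid p n (star_e i L)"
  unfolding valid_def by (induction L arbitrary: n) auto

lemma star_e_inj: "star_e i L = star_e i L' \<longleftrightarrow> L = L'"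
proof (induction L arbitrary: L')
  case Nil then show ?case by (cases L') (auto split: if_splits)
next
  case (Cons a L) then show ?case by (cases L') (auto split: if_splits)
qed


lemma sum_split_mult: fixes p N :: nat and f :: "nat \<Rightarrow> 'a::comm_monoid_add"
  shows "(\<Sum>k<p*N. f k) = (\<Sum>j<p. \<Sum>u<N. f (j*N+u))"
proof (induction p)
  case 0 then show ?case by simp
next
  case (Suc p)
  have "{..<Suc p * N} = {..<p*N} \<union> {p*N..<p*N+N}" by auto
  then have "(\<Sum>k<Suc p*N. f k) = (\<Sum>k<p*N. f k) + (\<Sum>k\<in>{p*N..<p*N+N}. f k)"
    by (simp add: sum.union_disjoint ivl_disj_int)
  also have "(\<Sum>k\<in>{p*N..<p*N+N}. f k) = (\<Sum>u<N. f (p*N+u))"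
    by (rule sum.reindex_bij_witness[of _ "\<lambda>u. p*N+u" "\<lambda>k. k - p*N"]) auto
  finally show ?case using Suc.IH by simp
qed

lemma delta_prod: "(x::nat) < N \<Longrightarrow> (\<Sum>u<N. (if u = x then 1 else 0) * (if u = y then 1 else 0) :: int) = (if x = y then 1 else 0)"
proof -
  assume x: "x < N"
  have "(\<Sum>u<N. (if u = x then 1 else 0) * (if u = y then 1 else 0) :: int) = (\<Sum>u<N. if u = x then (if x = y then 1 else 0) else 0)"
    by (rule sum.cong) auto
  also have "\<dots> = (if x = y then 1 else 0)" using x by (subst sum.delta) auto
  finally show ?thesis .
qed

definition bent :: "nat \<Rightarrow> nat \<Rightarrow> nat \<Rightarrow> nat \<Rightarrow> nat \<Rightarrow> int" where
  "bent p n j u w = (if word_of p n u = star_e j (word_of p n w) then 1 else 0) + (if u = w then 1 else 0)"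

lemma bent_alt: assumes "u < (p+1)^n" "j \<le> p"
  shows "bent p n j u w = (if u = wval p (star_e j (word_of p n w)) then 1 else 0) + (if u = w then 1 else 0)"
  unfolding bent_def using word_of_eq_iff[OF assms(1) star_e_valid[OF assms(2) valid_word_of]] by simp

lemma bent_sum: assumes w: "w < (p+1)^n" and w': "w' < (p+1)^n" and j: "j \<le> p"
  shows "(\<Sum>u<(p+1)^n. bent p n j u w * bent p n j u w') =
     2 * (if w = w' then 1 else 0) + perm_mat p n j $$ (w,w') + perm_mat_inv p n j $$ (w,w')"
proof -
  define N where "N = (p+1)^n"
  define a where "a = wval p (star_e j (word_of p n w))"
  define a' where "a' = wval p (star_e j (word_of p n w'))"
  have va: "valid p n (star_e j (word_of p n w))" "valid p n (star_e j (word_of p n w'))"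
    using star_e_valid[OF j valid_word_of] by auto
  have aN: "a < N" "a' < N" using word_of_wval[OF va(1)] word_of_wval[OF va(2)] unfolding a_def a'_def N_def by auto
  have e1: "(a = a') \<longleftrightarrow> w = w'"
  proof -
    have "(a = a') \<longleftrightarrow> star_e j (word_of p n w) = star_e j (word_of p n w')"
      unfolding a_def a'_def using word_of_wval[OF va(1)] word_of_wval[OF va(2)] by metis
    also have "\<dots> \<longleftrightarrow> w = w'" using star_e_inj word_of_inj[OF w w'] by simp
    finally show ?thesis .
  qed
  have e2: "(a = w') \<longleftrightarrow> star_e j (word_of p n w) = word_of p n w'"
    using word_of_eq_iff[OF w' va(1)] unfolding a_def by metis
  have e3: "(w = a') \<longleftrightarrow> word_of p n w = star_e j (word_of p n w')"
    using word_of_eq_iff[OF w va(2)] unfolding a'_def by metis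
  have "(\<Sum>u<N. bent p n j u w * bent p n j u w') =
      (\<Sum>u<N. ((if u = a then 1 else 0) + (if u = w then 1 else 0)) * ((if u = a' then 1 else 0) + (if u = w' then 1 else 0)))"
    by (rule sum.cong) (auto simp: bent_alt N_def j a_def a'_def)
  also have "\<dots> = (\<Sum>u<N. (if u = a then 1 else 0) * (if u = a' then 1 else 0)) + (\<Sum>u<N. (if u = a then 1 else 0) * (if u = w' then 1 else 0))
     + (\<Sum>u<N. (if u = w then 1 else 0) * (if u = a' then 1 else 0)) + (\<Sum>u<N. (if u = w then 1 else 0) * (if u = w' then 1 else 0 :: int))"
    by (simp only: distrib_left distrib_right sum.distrib add.assoc)
  also have "\<dots> = (if a = a' then 1 else 0) + (if a = w' then 1 else 0) + (if w = a' then 1 else 0) + (if w = w' then 1 else 0)"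
    using aN w unfolding N_def by (simp only: delta_prod)
  finally show ?thesis unfolding N_def perm_mat_def perm_mat_inv_def using w w' e1 e2 e3 by auto
qed


definition Bm :: "nat \<Rightarrow> nat \<Rightarrow> int mat" where
  "Bm p n = mat (p*(p+1)^n) ((p+1)^n) (\<lambda>(k,w). bent p n (k div (p+1)^n + 1) (k mod (p+1)^n) w)"

lemma gram: assumes w: "w < (p+1)^n" and w': "w' < (p+1)^n"
  shows "(\<Sum>k<p*(p+1)^n. Bm p n $$ (k,w) * Bm p n $$ (k,w')) =
     2 * int p * (if w = w' then 1 else 0) + adj_mat p n $$ (w,w')"
proof -
  define N where "N = (p+1)^n"
  have N0: "N > 0" unfolding N_def by simp
  have "(\<Sum>k<p*N. Bm p n $$ (k,w) * Bm p n $$ (k,w')) = (\<Sum>j<p. \<Sum>u<N. Bm p n $$ (j*N+u,w) * Bm p n $$ (j*N+u,w'))"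
    by (rule sum_split_mult)
  also have "\<dots> = (\<Sum>j<p. \<Sum>u<N. bent p n (j+1) u w * bent p n (j+1) u w')"
  proof (intro sum.cong refl)
    fix j u assume j: "j \<in> {..<p}" and u: "u \<in> {..<N}"
    have k: "j*N+u < p*N"
    proof -
      have "j*N + u < j*N + N" using u by simp
      also have "\<dots> = (j+1)*N" by simp
      also have "\<dots> \<le> p*N" using j by (intro mult_right_mono) auto
      finally show ?thesis .
    qed
    have "(j*N+u) div N = j" "(j*N+u) mod N = u" using u N0 by auto
    then show "Bm p n $$ (j*N+u,w) * Bm p n $$ (j*N+u,w') = bent p n (j+1) u w * bent p n (j+1) u w'"
      using k w w' unfolding Bm_def N_def by simp
  qed
  also have "\<dots> = (\<Sum>j<p. 2 * (if w = w' then 1 else 0) + perm_mat p n (j+1) $$ (w,w') + perm_mat_inv p n (j+1) $$ (w,w'))"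
    by (intro sum.cong refl bent_sum[OF w w', folded N_def]) auto
  also have "\<dots> = 2 * int p * (if w = w' then 1 else 0) + (\<Sum>j<p. perm_mat p n (j+1) $$ (w,w') + perm_mat_inv p n (j+1) $$ (w,w'))"
    by (simp add: sum.distrib)
  also have "(\<Sum>j<p. perm_mat p n (j+1) $$ (w,w') + perm_mat_inv p n (j+1) $$ (w,w')) = 
     (\<Sum>i=1..p. perm_mat p n i $$ (w,w') + perm_mat_inv p n i $$ (w,w'))"
    by (rule sum.reindex_bij_witness[of _ "\<lambda>i. i - 1" "\<lambda>j. j + 1"]) auto
  also have "\<dots> = adj_mat p n $$ (w,w')" unfolding adj_mat_def using w w' by simp
  finally show ?thesis unfolding N_def .
qed

lemma similar_reindex:
  fixes A :: "'a::comm_ring_1 mat"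
  assumes A: "A \<in> carrier_mat m m" and bij: "bij_betw \<tau> {..<m} {..<m}"
  shows "similar_mat A (mat m m (\<lambda>(i,j). A $$ (\<tau> i, \<tau> j)))"
proof -
  define \<sigma> where "\<sigma> = inv_into {..<m} \<tau>"
  have s1: "\<And>r. r < m \<Longrightarrow> \<sigma> r < m \<and> \<tau> (\<sigma> r) = r"
    using bij unfolding \<sigma>_def by (meson bij_betw_inv_into_right bij_betw_apply bij_betw_inv_into lessThan_iff)
  have s2: "\<And>i r. i < m \<Longrightarrow> r < m \<Longrightarrow> (r = \<tau> i) \<longleftrightarrow> (i = \<sigma> r)"
    using bij unfolding \<sigma>_def by (metis bij_betw_inv_into_left bij_betw_inv_into_right lessThan_iff)
  have delta: "\<And>r (f :: nat \<Rightarrow> 'a). r < m \<Longrightarrow> (\<Sum>i\<in>{0..<m}. (if r = \<tau> i then 1 else 0) * f i) = f (\<sigma> r)"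
  proof -
    fix r and f :: "nat \<Rightarrow> 'a" assume r: "r < m"
    have "(\<Sum>i\<in>{0..<m}. (if r = \<tau> i then 1 else 0) * f i) = (\<Sum>i\<in>{0..<m}. if i = \<sigma> r then f i else 0)"
      by (rule sum.cong) (use s2 r in auto)
    also have "\<dots> = f (\<sigma> r)" using s1[OF r] by (simp add: sum.delta)
    finally show "(\<Sum>i\<in>{0..<m}. (if r = \<tau> i then 1 else 0) * f i) = f (\<sigma> r)" .
  qed
  have delta2: "\<And>r (f :: nat \<Rightarrow> 'a). r < m \<Longrightarrow> (\<Sum>i\<in>{0..<m}. f i * (if r = \<tau> i then 1 else 0)) = f (\<sigma> r)"
    using delta by (simp add: mult.commute)
  define P :: "'a mat" where "P = mat m m (\<lambda>(r,i). if r = \<tau> i then 1 else 0)"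
  define Q :: "'a mat" where "Q = mat m m (\<lambda>(i,r). if r = \<tau> i then 1 else 0)"
  define B where "B = mat m m (\<lambda>(i,j). A $$ (\<tau> i, \<tau> j))"
  have PQ: "P * Q = 1\<^sub>m m"
  proof (rule eq_matI)
    fix r c assume r: "r < dim_row (1\<^sub>m m)" and c: "c < dim_col (1\<^sub>m m)"
    have "(P * Q) $$ (r,c) = (\<Sum>i\<in>{0..<m}. (if r = \<tau> i then 1 else 0) * (if c = \<tau> i then 1 else 0))"
      using r c by (simp add: P_def Q_def scalar_prod_def)
    also have "\<dots> = (if c = \<tau> (\<sigma> r) then 1 else 0)" using r by (simp add: delta)
    also have "\<dots> = 1\<^sub>m m $$ (r,c)" using r c s1 by auto
    finally show "(P * Q) $$ (r,c) = 1\<^sub>m m $$ (r,c)" .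
  qed (auto simp: P_def Q_def)
  have QP: "Q * P = 1\<^sub>m m"
  proof (rule eq_matI)
    fix i j assume i: "i < dim_row (1\<^sub>m m)" and j: "j < dim_col (1\<^sub>m m)"
    have "(Q * P) $$ (i,j) = (\<Sum>r\<in>{0..<m}. (if r = \<tau> i then 1 else 0) * (if r = \<tau> j then 1 else 0))"
      using i j by (simp add: P_def Q_def scalar_prod_def)
    also have "\<dots> = (\<Sum>r\<in>{0..<m}. if r = \<tau> i then (if \<tau> i = \<tau> j then 1 else 0) else 0)"
      by (rule sum.cong) auto
    also have "\<dots> = (if \<tau> i = \<tau> j then 1 else 0)"
      using i bij_betw_apply[OF bij] by (subst sum.delta) auto
    also have "\<dots> = 1\<^sub>m m $$ (i,j)" using i j bij_betw_imp_inj_on[OF bij] by (auto dest: inj_onD)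
    finally show "(Q * P) $$ (i,j) = 1\<^sub>m m $$ (i,j)" .
  qed (auto simp: P_def Q_def)
  have PB: "P * B = mat m m (\<lambda>(r,j). A $$ (r, \<tau> j))"
  proof (rule eq_matI)
    fix r j assume r: "r < dim_row (mat m m (\<lambda>(r,j). A $$ (r, \<tau> j)))" and j: "j < dim_col (mat m m (\<lambda>(r,j). A $$ (r, \<tau> j)))"
    have "(P * B) $$ (r,j) = (\<Sum>i\<in>{0..<m}. (if r = \<tau> i then 1 else 0) * A $$ (\<tau> i, \<tau> j))"
      using r j by (simp add: P_def B_def scalar_prod_def)
    also have "\<dots> = A $$ (\<tau> (\<sigma> r), \<tau> j)" using r by (simp add: delta)
    finally show "(P * B) $$ (r,j) = mat m m (\<lambda>(r,j). A $$ (r, \<tau> j)) $$ (r,j)" using r j s1 by simp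
  qed (auto simp: P_def B_def)
  have PBQ: "P * B * Q = A"
  proof (rule eq_matI)
    fix r c assume r: "r < dim_row A" and c: "c < dim_col A"
    have "(P * B * Q) $$ (r,c) = (\<Sum>j\<in>{0..<m}. A $$ (r, \<tau> j) * (if c = \<tau> j then 1 else 0))"
      using r c A by (simp add: PB Q_def scalar_prod_def)
    also have "\<dots> = A $$ (r, \<tau> (\<sigma> c))" using c A by (simp add: delta2)
    finally show "(P * B * Q) $$ (r,c) = A $$ (r,c)" using c A s1 by simp
  qed (use A in \<open>auto simp: PB Q_def\<close>)
  have "similar_mat_wit A B P Q"
    unfolding similar_mat_wit_def Let_def using A PQ QP PBQ by (auto simp: P_def Q_def B_def)
  then show ?thesis unfolding similar_mat_def B_def by blast
qed

lemma sum_except_one: assumes "finite S" "y \<in> S"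
  shows "(\<Sum>i\<in>S. if i = y then 0 else d) = of_nat (card S - 1) * (d :: int)"
proof -
  have "(\<Sum>i\<in>S. if i = y then 0 else d) = (\<Sum>i\<in>S - {y}. if i = y then 0 else d)"
    using assms by (subst sum.remove[of S y]) auto
  also have "\<dots> = (\<Sum>i\<in>S - {y}. d)" by (rule sum.cong) auto
  also have "\<dots> = of_nat (card S - 1) * d" using assms by simp
  finally show ?thesis .
qed

definition wentry :: "nat \<Rightarrow> nat \<Rightarrow> nat list \<Rightarrow> nat \<Rightarrow> nat list \<Rightarrow> int" where
  "wentry p x L y L' = (\<Sum>i=1..p. (if x # L = star_e i (y # L') then 1 else 0) + (if star_e i (x # L) = y # L' then 1 else 0))"

lemma wentry_00: "wentry p 0 L 0 L' = 0"
  unfolding wentry_def by (intro sum.neutral) auto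

lemma wentry_0y: assumes "1 \<le> y" "y \<le> p"
  shows "wentry p 0 L y L' = (if L = L' then 1 else 0) + (if star_e y L = L' then 1 else 0)"
proof -
  have "wentry p 0 L y L' = (\<Sum>i=1..p. if i = y then (if L = L' then 1 else 0) + (if star_e y L = L' then 1 else 0) else 0)"
    unfolding wentry_def by (rule sum.cong) (use assms in auto)
  also have "\<dots> = (if L = L' then 1 else 0) + (if star_e y L = L' then 1 else 0)"
    using assms by (subst sum.delta) auto
  finally show ?thesis .
qed

lemma wentry_x0: assumes "1 \<le> x" "x \<le> p"
  shows "wentry p x L 0 L' = (if L = star_e x L' then 1 else 0) + (if L = L' then 1 else 0)"
proof -
  have "wentry p x L 0 L' = (\<Sum>i=1..p. if i = x then (if L = star_e x L' then 1 else 0) + (if L = L' then 1 else 0) else 0)"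
    unfolding wentry_def by (rule sum.cong) (use assms in auto)
  also have "\<dots> = (if L = star_e x L' then 1 else 0) + (if L = L' then 1 else 0)"
    using assms by (subst sum.delta) auto
  finally show ?thesis .
qed

lemma wentry_xy: assumes "1 \<le> x" "x \<le> p" "1 \<le> y" "y \<le> p"
  shows "wentry p x L y L' = (if x = y \<and> L = L' then 2 * (int p - 1) else 0)"
proof -
  define d :: int where "d = (if x = y \<and> L = L' then 1 else 0)"
  have "wentry p x L y L' = (\<Sum>i=1..p. (if i = y then 0 else d) + (if i = x then 0 else d))"
    unfolding wentry_def d_def by (rule sum.cong) (use assms in auto)
  also have "\<dots> = of_nat (card {1..p} - 1) * d + of_nat (card {1..p} - 1) * d"
    by (simp only: sum.distrib sum_except_one[of "{1..p}"] assms finite_atLeastAtMost atLeastAtMost_iff conj_absorb) 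
  also have "\<dots> = (if x = y \<and> L = L' then 2 * (int p - 1) else 0)"
    using assms unfolding d_def by (auto simp: of_nat_diff)
  finally show ?thesis .
qed


lemma divmod_small: fixes r b q :: nat assumes "r < b"
  shows "(r + b*q) div b = q" "(r + b*q) mod b = r" "(q*b + r) div b = q" "(q*b + r) mod b = r"
proof -
  show a: "(r + b*q) div b = q" using div_mult_self2[of b r q] div_less[OF assms] assms by linarith
  show b: "(r + b*q) mod b = r" using mod_mult_self2[of r b q] mod_less[OF assms] by linarith
  show "(q*b + r) div b = q" using a by (simp add: add.commute mult.commute)
  show "(q*b + r) mod b = r" using b by (simp add: add.commute mult.commute)
qed

definition tau :: "nat \<Rightarrow> nat \<Rightarrow> nat \<Rightarrow> nat" where
  "tau p n K = K div (p+1)^n + (p+1) * (K mod (p+1)^n)"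

lemma div_bound: fixes K N q :: nat assumes "K < q * N" shows "K div N < q"
  using assms by (metis less_mult_imp_div_less mult.commute)

lemma tau_props: fixes K :: nat assumes K: "K < (p+1)^Suc n"
  shows "tau p n K < (p+1)^Suc n" "tau p n K mod (p+1) = K div (p+1)^n" "tau p n K div (p+1) = K mod (p+1)^n"
proof -
  define N where "N = (p+1)^n"
  have N0: "N > 0" unfolding N_def by simp
  have x: "K div N < p+1" using K div_bound[of K "p+1" N] unfolding N_def by (simp add: mult.commute)
  have u: "K mod N < N" using N0 by simp
  have "K div N + (p+1) * (K mod N) < (p+1) + (p+1) * (K mod N)" using x by simp
  also have "\<dots> = (p+1) * (K mod N + 1)" by simp
  also have "\<dots> \<le> (p+1) * N" using u by (intro mult_left_mono) auto
  finally show "tau p n K < (p+1)^Suc n" unfolding tau_def N_def by simp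
  show "tau p n K mod (p+1) = K div (p+1)^n" "tau p n K div (p+1) = K mod (p+1)^n"
    unfolding tau_def using divmod_small(1,2)[OF x[unfolded N_def]] by auto
qed

lemma tau_bij: "bij_betw (tau p n) {..<(p+1)^Suc n} {..<(p+1)^Suc n}"
proof (rule bij_betw_byWitness[where f' = "\<lambda>k. (k mod (p+1)) * (p+1)^n + k div (p+1)"])
  define N where "N = (p+1)^n"
  have N0: "N > 0" unfolding N_def by simp
  show "\<forall>a\<in>{..<(p+1)^Suc n}. (tau p n a mod (p+1)) * (p+1)^n + tau p n a div (p+1) = a"
  proof
    fix a assume "a \<in> {..<(p+1)^Suc n}"
    then have a: "a < (p+1)^Suc n" by simp
    show "(tau p n a mod (p+1)) * (p+1)^n + tau p n a div (p+1) = a"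
      by (simp only: tau_props(2,3)[OF a] div_mult_mod_eq)
  qed
  show "tau p n ` {..<(p+1)^Suc n} \<subseteq> {..<(p+1)^Suc n}" using tau_props(1) by auto
  have bnd: "k div (p+1) < N \<and> k mod (p+1) < p + 1" if k: "k < (p+1)^Suc n" for k
  proof -
    have "k < N * (p+1)" using k unfolding N_def by (simp only: power_Suc mult.commute)
    then show ?thesis using div_bound[of k N "p+1"] by simp
  qed
  show "\<forall>a'\<in>{..<(p+1)^Suc n}. tau p n ((a' mod (p+1)) * (p+1)^n + a' div (p+1)) = a'"
  proof
    fix k assume "k \<in> {..<(p+1)^Suc n}"
    then have b: "k div (p+1) < N" "k mod (p+1) < p+1" using bnd by auto
    have "tau p n ((k mod (p+1)) * N + k div (p+1)) = k mod (p+1) + (p+1) * (k div (p+1))"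
      unfolding tau_def N_def[symmetric] using divmod_small(3,4)[OF b(1)] by simp
    also have "\<dots> = k" by (rule mod_mult_div_eq)
    finally show "tau p n ((k mod (p+1)) * (p+1)^n + k div (p+1)) = k" unfolding N_def .
  qed
  show "(\<lambda>k. (k mod (p+1)) * (p+1)^n + k div (p+1)) ` {..<(p+1)^Suc n} \<subseteq> {..<(p+1)^Suc n}"
  proof
    fix k' assume "k' \<in> (\<lambda>k. (k mod (p+1)) * (p+1)^n + k div (p+1)) ` {..<(p+1)^Suc n}"
    then obtain k where k: "k < (p+1)^Suc n" and k': "k' = (k mod (p+1)) * N + k div (p+1)" unfolding N_def by auto
    have b: "k div (p+1) < N" "k mod (p+1) < p+1" using bnd[OF k] by auto
    have "k' < (k mod (p+1)) * N + N" using b k' by simp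
    also have "\<dots> = (k mod (p+1) + 1) * N" by simp
    also have "\<dots> \<le> (p+1) * N" using b by (intro mult_right_mono) auto
    finally show "k' \<in> {..<(p+1)^Suc n}" unfolding N_def by (simp add: mult.commute)
  qed
qed

lemma word_tau: assumes "K < (p+1)^Suc n"
  shows "word_of p (Suc n) (tau p n K) = (K div (p+1)^n) # word_of p n (K mod (p+1)^n)"
  using tau_props[OF assms] by (simp add: word_of_Suc)

lemma adj_entry: assumes K: "K < (p+1)^Suc n" and K': "K' < (p+1)^Suc n"
  shows "adj_mat p (Suc n) $$ (tau p n K, tau p n K') =
     wentry p (K div (p+1)^n) (word_of p n (K mod (p+1)^n)) (K' div (p+1)^n) (word_of p n (K' mod (p+1)^n))"
proof -
  have t: "tau p n K < (p+1)^Suc n" "tau p n K' < (p+1)^Suc n" using tau_props(1) K K' by auto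
  have "adj_mat p (Suc n) $$ (tau p n K, tau p n K') = (\<Sum>i=1..p. (if word_of p (Suc n) (tau p n K) = star_e i (word_of p (Suc n) (tau p n K')) then 1 else 0)
     + (if star_e i (word_of p (Suc n) (tau p n K)) = word_of p (Suc n) (tau p n K') then 1 else 0))"
    unfolding adj_mat_def using t by (simp add: perm_mat_def perm_mat_inv_def del: power_Suc)
  then show ?thesis unfolding wentry_def by (simp only: word_tau[OF K] word_tau[OF K'])
qed


lemma bent_eq: "bent p n j u w = (if word_of p n u = star_e j (word_of p n w) then 1 else 0) + (if u = w then 1 else 0)"
  by (simp add: bent_def)

lemma adj_block:
  fixes p n :: nat
  defines "N \<equiv> (p+1)^n"
  shows "mat ((p+1)^Suc n) ((p+1)^Suc n) (\<lambda>(K,K'). adj_mat p (Suc n) $$ (tau p n K, tau p n K')) =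
    four_block_mat (0\<^sub>m N N) (transpose_mat (Bm p n)) (Bm p n) ((2 * (int p - 1)) \<cdot>\<^sub>m 1\<^sub>m (p*N))"
    (is "?L = ?R")
proof (rule eq_matI)
  have dim: "(p+1)^Suc n = N + p*N" unfolding N_def by simp
  have N0: "N > 0" unfolding N_def by simp
  have dB: "dim_row (Bm p n) = p*N" "dim_col (Bm p n) = N" unfolding Bm_def N_def by auto
  show "dim_row ?L = dim_row ?R" "dim_col ?L = dim_col ?R" using dim dB by auto
  fix K K' assume K: "K < dim_row ?R" and K': "K' < dim_col ?R"
  have KK: "K < N + p*N" "K' < N + p*N" using K K' dB by auto
  have KS: "K < (p+1)^Suc n" "K' < (p+1)^Suc n" using KK dim by auto
  have xb: "K div N \<le> p" "K' div N \<le> p"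
    using div_bound[of K "p+1" N] div_bound[of K' "p+1" N] KK by auto
  have um: "K mod N < N" "K' mod N < N" using N0 by auto
  have L: "?L $$ (K,K') = wentry p (K div N) (word_of p n (K mod N)) (K' div N) (word_of p n (K' mod N))"
    using KS adj_entry[OF KS] unfolding N_def by simp
  have wi: "\<And>a b. a < N \<Longrightarrow> b < N \<Longrightarrow> word_of p n a = word_of p n b \<longleftrightarrow> a = b"
    using word_of_inj unfolding N_def by blast
  show "?L $$ (K,K') = ?R $$ (K,K')"
  proof (cases "K < N")
    case True
    note Kl = True
    then have x0: "K div N = 0" "K mod N = K" by auto
    show ?thesis
    proof (cases "K' < N")
      case True
      then have "K' div N = 0" by auto
      then show ?thesis using L x0 Kl True KK dB by (simp add: wentry_00)
    next
      case False
      define y where "y = K' div N"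
      have y: "1 \<le> y" "y \<le> p" using False xb le_div_geq[OF N0, of K'] unfolding y_def by auto
      have e1: "(K' - N) div N = y - 1" "(K' - N) mod N = K' mod N"
        using False N0 unfolding y_def by (auto simp: le_div_geq le_mod_geq)
      have R: "?R $$ (K,K') = Bm p n $$ (K' - N, K)"
        using Kl False KK dB by simp
      also have "\<dots> = bent p n y (K' mod N) K"
        using Kl False KK e1 y unfolding Bm_def N_def by simp
      finally show ?thesis using L x0 wentry_0y[OF y] wi[OF Kl um(2)] unfolding y_def
        by (auto simp: bent_eq)
    qed
  next
    case False
    note Kg = False
    define x where "x = K div N"
    have x: "1 \<le> x" "x \<le> p" using False xb le_div_geq[OF N0, of K] unfolding x_def by auto
    have e1: "(K - N) div N = x - 1" "(K - N) mod N = K mod N"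
      using False N0 unfolding x_def by (auto simp: le_div_geq le_mod_geq)
    show ?thesis
    proof (cases "K' < N")
      case True
      then have y0: "K' div N = 0" "K' mod N = K'" by auto
      have R: "?R $$ (K,K') = Bm p n $$ (K - N, K')"
        using Kg True KK dB by simp
      also have "\<dots> = bent p n x (K mod N) K'"
        using Kg True KK e1 x unfolding Bm_def N_def by simp
      finally show ?thesis using L y0 wentry_x0[OF x] wi[OF um(1) True] unfolding x_def
        by (auto simp: bent_eq)
    next
      case False
      define y where "y = K' div N"
      have y: "1 \<le> y" "y \<le> p" using False xb le_div_geq[OF N0, of K'] unfolding y_def by auto
      have R: "?R $$ (K,K') = (2 * (int p - 1)) * (if K - N = K' - N then 1 else 0)"
        using Kg False KK dB by simp
      have "K = K' \<longleftrightarrow> x = y \<and> K mod N = K' mod N"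
        unfolding x_def y_def by (metis div_mult_mod_eq)
      then show ?thesis using R L wentry_xy[OF x y] wi[OF um] Kg False unfolding x_def y_def
        by auto
    qed
  qed
qed

lemma pcompose_hom: "comm_ring_hom (\<lambda>q. pcompose q (f :: 'a::comm_ring_1 poly))"
  by unfold_locales (auto simp: pcompose_add pcompose_mult)

lemma Bm_carrier: "Bm p n \<in> carrier_mat (p*(p+1)^n) ((p+1)^n)"
  unfolding Bm_def by simp

lemma adj_carrier: "adj_mat p n \<in> carrier_mat ((p+1)^n) ((p+1)^n)"
  unfolding adj_mat_def by simp

lemma char_poly_rec:
  fixes p n :: nat assumes p: "p \<ge> 1"
  shows "char_poly (adj_mat p (Suc n)) =
    [: - 2 * (int p - 1), 1 :] ^ ((p - 1) * (p + 1) ^ n) * pcompose (char_poly (adj_mat p n)) (f_poly p)"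
proof -
  define N where "N = (p+1)^n"
  define m where "m = p * N"
  define c :: int where "c = 2 * (int p - 1)"
  define X :: "int poly" where "X = [:0,1:]"
  define Y :: "int poly" where "Y = [:-c,1:]"
  define B where "B = Bm p n"
  define mB where "mB = map_mat (\<lambda>a. [:-a:]) B"
  define mBT where "mBT = map_mat (\<lambda>a. [:-a:]) (transpose_mat B)"
  define pB where "pB = map_mat (\<lambda>a. [:a:]) B"
  define Ablk where "Ablk = four_block_mat (0\<^sub>m N N) (transpose_mat B) B (c \<cdot>\<^sub>m 1\<^sub>m m)"
  have B: "B \<in> carrier_mat m N" unfolding B_def m_def N_def using Bm_carrier .
  have cB: "mB \<in> carrier_mat m N" "pB \<in> carrier_mat m N" "mBT \<in> carrier_mat N m"
    using B unfolding mB_def pB_def mBT_def by auto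
  have "similar_mat (adj_mat p (Suc n)) (mat ((p+1)^Suc n) ((p+1)^Suc n) (\<lambda>(K,K'). adj_mat p (Suc n) $$ (tau p n K, tau p n K')))"
    by (rule similar_reindex[OF adj_carrier tau_bij])
  then have sim: "similar_mat (adj_mat p (Suc n)) Ablk"
    unfolding adj_block Ablk_def B_def m_def N_def c_def .
  have cp1: "char_poly (adj_mat p (Suc n)) = det (char_poly_matrix Ablk)"
    using char_poly_similar[OF sim] unfolding char_poly_def .
  define G where "G = four_block_mat (X \<cdot>\<^sub>m 1\<^sub>m N) mBT mB (Y \<cdot>\<^sub>m 1\<^sub>m m)"
  have CG: "char_poly_matrix Ablk = G"
  proof (rule eq_matI)
    show "dim_row (char_poly_matrix Ablk) = dim_row G" "dim_col (char_poly_matrix Ablk) = dim_col G"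
      using B cB unfolding G_def Ablk_def char_poly_matrix_def by auto
    fix i j assume i: "i < dim_row G" and j: "j < dim_col G"
    then have ij: "i < N + m" "j < N + m" using cB unfolding G_def by auto
    show "char_poly_matrix Ablk $$ (i,j) = G $$ (i,j)"
      using ij B cB unfolding G_def Ablk_def char_poly_matrix_def mB_def mBT_def X_def Y_def
      by (auto simp: pCons_one)
  qed
  define H where "H = four_block_mat (Y \<cdot>\<^sub>m 1\<^sub>m N) (0\<^sub>m N m) pB (1\<^sub>m m)"
  have detH: "det H = Y ^ N"
    unfolding H_def using cB by (subst det_four_block_mat_upper_right_zero[of _ N _ m]) auto
  define T where "T = (X \<cdot>\<^sub>m 1\<^sub>m N) * (Y \<cdot>\<^sub>m 1\<^sub>m N) + mBT * pB"
  have GH: "G * H = four_block_mat T mBT (0\<^sub>m m N) (Y \<cdot>\<^sub>m 1\<^sub>m m)"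
  proof -
    have "G * H = four_block_mat ((X \<cdot>\<^sub>m 1\<^sub>m N) * (Y \<cdot>\<^sub>m 1\<^sub>m N) + mBT * pB)
       ((X \<cdot>\<^sub>m 1\<^sub>m N) * 0\<^sub>m N m + mBT * 1\<^sub>m m)
       (mB * (Y \<cdot>\<^sub>m 1\<^sub>m N) + (Y \<cdot>\<^sub>m 1\<^sub>m m) * pB)
       (mB * 0\<^sub>m N m + (Y \<cdot>\<^sub>m 1\<^sub>m m) * 1\<^sub>m m)"
      unfolding G_def H_def using cB by (intro mult_four_block_mat) auto
    also have "(X \<cdot>\<^sub>m 1\<^sub>m N) * 0\<^sub>m N m + mBT * 1\<^sub>m m = mBT"
      using cB by simp
    also have "mB * 0\<^sub>m N m + (Y \<cdot>\<^sub>m 1\<^sub>m m) * 1\<^sub>m m = Y \<cdot>\<^sub>m 1\<^sub>m m"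
      using cB by simp
    also have "mB * (Y \<cdot>\<^sub>m 1\<^sub>m N) + (Y \<cdot>\<^sub>m 1\<^sub>m m) * pB = 0\<^sub>m m N"
    proof -
      have "mB * (Y \<cdot>\<^sub>m 1\<^sub>m N) = Y \<cdot>\<^sub>m mB"
        using cB by (simp add: mult_smult_distrib[of _ m N _ N])
      moreover have "(Y \<cdot>\<^sub>m 1\<^sub>m m) * pB = Y \<cdot>\<^sub>m pB"
        using cB by (simp add: mult_smult_assoc_mat[of _ m m _ N])
      moreover have "Y \<cdot>\<^sub>m mB + Y \<cdot>\<^sub>m pB = 0\<^sub>m m N"
        by (rule eq_matI) (use cB in \<open>auto simp: mB_def pB_def algebra_simps\<close>)
      ultimately show ?thesis by simp
    qed
    finally show ?thesis unfolding T_def .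
  qed
  have cT: "T \<in> carrier_mat N N" unfolding T_def using cB by auto
  have detGH: "det (G * H) = det T * Y ^ m"
    unfolding GH using cT cB by (subst det_four_block_mat_lower_left_zero[of _ N _ m]) auto
  have cG: "G \<in> carrier_mat (N+m) (N+m)" "H \<in> carrier_mat (N+m) (N+m)"
    unfolding G_def H_def using cB by auto
  have detGH2: "det (G * H) = det G * Y ^ N" using det_mult[OF cG] detH by simp
  have Tmap: "T = map_mat (\<lambda>q. pcompose q (f_poly p)) (char_poly_matrix (adj_mat p n))"
  proof (rule eq_matI)
    have cA: "adj_mat p n \<in> carrier_mat N N" using adj_carrier unfolding N_def .
    have cC: "char_poly_matrix (adj_mat p n) \<in> carrier_mat N N" using cA by simp
    show "dim_row T = dim_row (map_mat (\<lambda>q. pcompose q (f_poly p)) (char_poly_matrix (adj_mat p n)))"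
      "dim_col T = dim_col (map_mat (\<lambda>q. pcompose q (f_poly p)) (char_poly_matrix (adj_mat p n)))"
      using cT cC by auto
    fix w w' assume "w < dim_row (map_mat (\<lambda>q. pcompose q (f_poly p)) (char_poly_matrix (adj_mat p n)))"
      "w' < dim_col (map_mat (\<lambda>q. pcompose q (f_poly p)) (char_poly_matrix (adj_mat p n)))"
    then have w: "w < N" "w' < N" using cC by auto
    have XY: "(X \<cdot>\<^sub>m 1\<^sub>m N) * (Y \<cdot>\<^sub>m 1\<^sub>m N) = X \<cdot>\<^sub>m (Y \<cdot>\<^sub>m 1\<^sub>m N)"
      by (simp add: mult_smult_assoc_mat[of _ N N _ N])
    have "(mBT * pB) $$ (w,w') = (\<Sum>k\<in>{0..<m}. [:- (B $$ (k,w)):] * [:B $$ (k,w'):])"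
      using w cB B unfolding mBT_def pB_def by (simp add: scalar_prod_def)
    also have "\<dots> = (\<Sum>k\<in>{0..<m}. [:- (B $$ (k,w) * B $$ (k,w')):])"
      by (rule sum.cong) auto
    also have "\<dots> = [:- (\<Sum>k<m. B $$ (k,w) * B $$ (k,w')):]"
      by (simp add: sum_to_poly sum_negf lessThan_atLeast0)
    also have "\<dots> = [:- (2 * int p * (if w = w' then 1 else 0) + adj_mat p n $$ (w,w')):]"
      using gram[of w p n w'] w unfolding B_def m_def N_def by simp
    finally have e2: "(mBT * pB) $$ (w,w') = [:- (2 * int p * (if w = w' then 1 else 0) + adj_mat p n $$ (w,w')):]" .
    have Tw: "T $$ (w,w') = X * (Y * (if w = w' then 1 else 0)) + [:- (2 * int p * (if w = w' then 1 else 0) + adj_mat p n $$ (w,w')):]"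
      unfolding T_def XY using w cB e2 by simp
    have Mw: "map_mat (\<lambda>q. pcompose q (f_poly p)) (char_poly_matrix (adj_mat p n)) $$ (w,w') =
       pcompose (X * (if w = w' then 1 else 0) + [:- (adj_mat p n $$ (w,w')):]) (f_poly p)"
      using w cA unfolding char_poly_matrix_def X_def by simp
    have PX: "pcompose X (f_poly p) = f_poly p" unfolding X_def by (simp add: pcompose_pCons)
    define a where "a = adj_mat p n $$ (w,w')"
    show "T $$ (w,w') = map_mat (\<lambda>q. pcompose q (f_poly p)) (char_poly_matrix (adj_mat p n)) $$ (w,w')"
    proof (cases "w = w'")
      case True
      have "T $$ (w,w') = [: - 2 * int p - a, - c, 1 :]"
        unfolding Tw a_def[symmetric] using True by (simp add: X_def Y_def algebra_simps)
      moreover have "pcompose (X * (if w = w' then 1 else 0) + [:- a:]) (f_poly p) = f_poly p + [:- a:]"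
        using True by (simp add: pcompose_add PX)
      moreover have "f_poly p + [:- a:] = [: - 2 * int p - a, - c, 1 :]"
        by (simp add: f_poly_def c_def algebra_simps)
      ultimately show ?thesis using Mw unfolding a_def by simp
    next
      case False
      have "T $$ (w,w') = [: - a :]"
        unfolding Tw a_def[symmetric] using False by simp
      moreover have "pcompose (X * (if w = w' then 1 else 0) + [:- a:]) (f_poly p) = [: - a :]"
        using False by simp
      ultimately show ?thesis using Mw unfolding a_def by simp
    qed
  qed
  have detT: "det T = pcompose (char_poly (adj_mat p n)) (f_poly p)"
    unfolding Tmap char_poly_def by (rule comm_ring_hom.hom_det[OF pcompose_hom])
  have mN: "m = (p-1)*N + N" unfolding m_def using p by (cases p) auto
  have Y0: "Y ^ N \<noteq> 0" unfolding Y_def by simp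
  have "det G * Y ^ N = (Y ^ ((p-1)*N) * det T) * Y ^ N"
    using detGH detGH2 mN by (simp add: power_add algebra_simps)
  then have "det G = Y ^ ((p-1)*N) * det T" using Y0 mult_right_cancel by blast
  then show ?thesis using cp1 CG detT unfolding Y_def c_def N_def by simp
qed


lemma adj0: "adj_mat p 0 $$ (0,0) = 2 * int p"
  unfolding adj_mat_def perm_mat_def perm_mat_inv_def by simp

lemma char_poly_0: "char_poly (adj_mat p 0) = [: - 2 * int p, 1 :]"
proof -
  have c: "char_poly_matrix (adj_mat p 0) \<in> carrier_mat 1 1"
    using adj_carrier[of p 0] by simp
  have "char_poly (adj_mat p 0) = char_poly_matrix (adj_mat p 0) $$ (0,0)"
    unfolding char_poly_def using det_single[OF c] .
  also have "\<dots> = [:0,1:] + [: - (2 * int p) :]"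
    using adj_carrier[of p 0] adj0[of p] unfolding char_poly_matrix_def by simp
  finally show ?thesis by simp
qed

theorem theorem3p8:
  fixes p :: nat
  assumes "p \<ge> 1"
  shows "(\<forall>n\<ge>1. char_poly (adj_mat p (Suc n)) =
            [: - 2 * (int p - 1), 1 :] ^ ((p - 1) * (p + 1) ^ n)
            * pcompose (char_poly (adj_mat p n)) (f_poly p))
       \<and> char_poly (adj_mat p 1) =
            [: - 2 * int p, 1 :] * [: 2, 1 :] * [: - 2 * (int p - 1), 1 :] ^ (p - 1)"
proof
  show "\<forall>n\<ge>1. char_poly (adj_mat p (Suc n)) =
            [: - 2 * (int p - 1), 1 :] ^ ((p - 1) * (p + 1) ^ n)
            * pcompose (char_poly (adj_mat p n)) (f_poly p)"
    using char_poly_rec[OF assms] by blast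
  have "char_poly (adj_mat p 1) = [: - 2 * (int p - 1), 1 :] ^ (p - 1) * pcompose [: - 2 * int p, 1 :] (f_poly p)"
    using char_poly_rec[OF assms, of 0] by (simp add: char_poly_0)
  also have "pcompose [: - 2 * int p, 1 :] (f_poly p) = [: - 2 * int p, 1 :] * [: 2, 1 :]"
    by (simp add: pcompose_pCons f_poly_def algebra_simps)
  finally show "char_poly (adj_mat p 1) =
            [: - 2 * int p, 1 :] * [: 2, 1 :] * [: - 2 * (int p - 1), 1 :] ^ (p - 1)"
    by (simp add: mult.commute)
qed

end
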